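(* In the category $\mathrm{Vect}$ of vector spaces over a field and linear maps, the (surjective, injective) = (epi, mono) factorisation system is costable, i.e. monomorphisms are stable under pushout. Moreover, the assignment that is the identity on objects and sends an epi-mono corelation $U\xrightarrow{f}A\xleftarrow{g}V$ to the linear subspace $\ker[f\ \ -g]\subseteq U\oplus V$ is a full, faithful, bijective-on-objects functor $\mathrm{Corel}_{(\mathrm{Epi},\mathrm{Mono})}(\mathrm{Vect})\to\mathrm{LinRel}$; in particular these categories are isomorphic.
   Context: A factorisation system is costable if its right class is stable under pushout. For a factorisation system $(\mathcal E,\mathcal M)$ on a category with finite colimits, $\mathrm{Corel}_{(\mathcal E,\mathcal M)}$ has morphisms isomorphism classes of cospans $X\xrightarrow{i}N\xleftarrow{o}Y$ with $[i,o]\colon X+Y\to N$ in $\mathcal E$, composed by forming the pushout composite cospan $X\to N+_YM\leftarrow Z$ and then replacing the apex by the image $\overline{N+_YM}$ of the copairing $X+Z\to N+_YM$ (i.e. taking the $\mathcal E$ factor of its $(\mathcal E,\mathcal M)$-factorisation). $\mathrm{LinRel}$ is the category of vector spaces and linear relations $L\subseteq U\oplus V$, composed as relations: $(u,w)\in L;L'$ iff there is $v$ with $(u,v)\in L$, $(v,w)\in L'$. *)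

theory Defs
  imports Main
begin

text \<open>The field of scalars is a type 'k of class field (every field is, up to
isomorphism, of this form).\<close>

record ('k, 'a) vs =
  vcarrier :: "'a set"
  vadd :: "'a \<Rightarrow> 'a \<Rightarrow> 'a"
  vzero :: 'a
  vscale :: "'k \<Rightarrow> 'a \<Rightarrow> 'a"

definition vecspace :: "('k::field, 'a) vs \<Rightarrow> bool" where
  "vecspace V \<longleftrightarrow>
     vzero V \<in> vcarrier V \<and>
     (\<forall>x\<in>vcarrier V. \<forall>y\<in>vcarrier V. vadd V x y \<in> vcarrier V) \<and>
     (\<forall>c. \<forall>x\<in>vcarrier V. vscale V c x \<in> vcarrier V) \<and>
     (\<forall>x\<in>vcarrier V. \<forall>y\<in>vcarrier V. \<forall>z\<in>vcarrier V.
         vadd V (vadd V x y) z = vadd V x (vadd V y z)) \<and>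
     (\<forall>x\<in>vcarrier V. \<forall>y\<in>vcarrier V. vadd V x y = vadd V y x) \<and>
     (\<forall>x\<in>vcarrier V. vadd V (vzero V) x = x) \<and>
     (\<forall>x\<in>vcarrier V. \<exists>y\<in>vcarrier V. vadd V x y = vzero V) \<and>
     (\<forall>c. \<forall>x\<in>vcarrier V. \<forall>y\<in>vcarrier V.
         vscale V c (vadd V x y) = vadd V (vscale V c x) (vscale V c y)) \<and>
     (\<forall>a b. \<forall>x\<in>vcarrier V. vscale V (a + b) x = vadd V (vscale V a x) (vscale V b x)) \<and>
     (\<forall>a b. \<forall>x\<in>vcarrier V. vscale V a (vscale V b x) = vscale V (a * b) x) \<and>
     (\<forall>x\<in>vcarrier V. vscale V 1 x = x)"

text \<open>Linear maps (morphisms of Vect); only their values on the carrier matter.\<close>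
definition linmap :: "('k::field, 'a) vs \<Rightarrow> ('k, 'b) vs \<Rightarrow> ('a \<Rightarrow> 'b) \<Rightarrow> bool" where
  "linmap V W f \<longleftrightarrow>
     (\<forall>x\<in>vcarrier V. f x \<in> vcarrier W) \<and>
     (\<forall>x\<in>vcarrier V. \<forall>y\<in>vcarrier V. f (vadd V x y) = vadd W (f x) (f y)) \<and>
     (\<forall>c. \<forall>x\<in>vcarrier V. f (vscale V c x) = vscale W c (f x))"

definition subspace_of :: "('k::field, 'a) vs \<Rightarrow> 'a set \<Rightarrow> bool" where
  "subspace_of V S \<longleftrightarrow> S \<subseteq> vcarrier V \<and> vzero V \<in> S \<and>
     (\<forall>x\<in>S. \<forall>y\<in>S. vadd V x y \<in> S) \<and> (\<forall>c. \<forall>x\<in>S. vscale V c x \<in> S)"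

definition dsum :: "('k::field, 'a) vs \<Rightarrow> ('k, 'b) vs \<Rightarrow> ('k, 'a \<times> 'b) vs" where
  "dsum V W = \<lparr> vcarrier = vcarrier V \<times> vcarrier W,
      vadd = (\<lambda>(x1, y1) (x2, y2). (vadd V x1 x2, vadd W y1 y2)),
      vzero = (vzero V, vzero W),
      vscale = (\<lambda>c (x, y). (vscale V c x, vscale W c y)) \<rparr>"

definition vcoset :: "('k::field, 'a) vs \<Rightarrow> 'a set \<Rightarrow> 'a \<Rightarrow> 'a set" where
  "vcoset V S a = (\<lambda>s. vadd V a s) ` S"

definition quot :: "('k::field, 'a) vs \<Rightarrow> 'a set \<Rightarrow> ('k, 'a set) vs" where
  "quot V S = \<lparr> vcarrier = vcoset V S ` vcarrier V,
      vadd = (\<lambda>A B. vcoset V S (vadd V (SOME a. a \<in> A) (SOME b. b \<in> B))),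
      vzero = vcoset V S (vzero V),
      vscale = (\<lambda>c A. vcoset V S (vscale V c (SOME a. a \<in> A))) \<rparr>"

definition po_ker :: "('k::field, 'y) vs \<Rightarrow> ('k, 'n) vs \<Rightarrow> ('k, 'm) vs \<Rightarrow>
    ('y \<Rightarrow> 'n) \<Rightarrow> ('y \<Rightarrow> 'm) \<Rightarrow> ('n \<times> 'm) set" where
  "po_ker Y N M f g = {(f y, vscale M (-1) (g y)) | y. y \<in> vcarrier Y}"

definition pushout_sp :: "('k::field, 'y) vs \<Rightarrow> ('k, 'n) vs \<Rightarrow> ('k, 'm) vs \<Rightarrow>
    ('y \<Rightarrow> 'n) \<Rightarrow> ('y \<Rightarrow> 'm) \<Rightarrow> ('k, ('n \<times> 'm) set) vs" where
  "pushout_sp Y N M f g = quot (dsum N M) (po_ker Y N M f g)"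

definition po_inl :: "('k::field, 'y) vs \<Rightarrow> ('k, 'n) vs \<Rightarrow> ('k, 'm) vs \<Rightarrow>
    ('y \<Rightarrow> 'n) \<Rightarrow> ('y \<Rightarrow> 'm) \<Rightarrow> 'n \<Rightarrow> ('n \<times> 'm) set" where
  "po_inl Y N M f g n = vcoset (dsum N M) (po_ker Y N M f g) (n, vzero M)"

definition po_inr :: "('k::field, 'y) vs \<Rightarrow> ('k, 'n) vs \<Rightarrow> ('k, 'm) vs \<Rightarrow>
    ('y \<Rightarrow> 'n) \<Rightarrow> ('y \<Rightarrow> 'm) \<Rightarrow> 'm \<Rightarrow> ('n \<times> 'm) set" where
  "po_inr Y N M f g m = vcoset (dsum N M) (po_ker Y N M f g) (vzero N, m)"

text \<open>It is an (Epi,Mono)-corelation iff the copairing [i,j] : U \<oplus> V \<rightarrow> A is surjective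
(epimorphisms in Vect are the surjective linear maps).\<close>
type_synonym ('k, 'u, 'v, 'a) cospan = "('k, 'a) vs \<times> ('u \<Rightarrow> 'a) \<times> ('v \<Rightarrow> 'a)"

definition epi_corel :: "('k::field, 'u) vs \<Rightarrow> ('k, 'v) vs \<Rightarrow> ('k, 'u, 'v, 'a) cospan \<Rightarrow> bool" where
  "epi_corel U V c = (case c of (A, i, j) \<Rightarrow>
     vecspace A \<and> linmap U A i \<and> linmap V A j \<and>
     (\<forall>a\<in>vcarrier A. \<exists>u\<in>vcarrier U. \<exists>v\<in>vcarrier V. a = vadd A (i u) (j v)))"

text \<open>Isomorphism of cospans (morphisms of Corel are isomorphism classes).\<close>
definition cospan_iso :: "('k::field, 'u) vs \<Rightarrow> ('k, 'v) vs \<Rightarrow>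
    ('k, 'u, 'v, 'a) cospan \<Rightarrow> ('k, 'u, 'v, 'b) cospan \<Rightarrow> bool" where
  "cospan_iso U V c d = (case c of (A, i, j) \<Rightarrow> case d of (B, j', p) \<Rightarrow>
     (\<exists>\<phi>. linmap A B \<phi> \<and> bij_betw \<phi> (vcarrier A) (vcarrier B) \<and>
          (\<forall>u\<in>vcarrier U. \<phi> (i u) = j' u) \<and> (\<forall>v\<in>vcarrier V. \<phi> (j v) = p v)))"

definition corel_id :: "('k::field, 'x) vs \<Rightarrow> ('k, 'x, 'x, 'x) cospan" where
  "corel_id X = (X, id, id)"

text \<open>Composition in Corel: form the pushout composite cospan X \<rightarrow> N +_Y M \<leftarrow> Z, then
replace the apex by the image of the copairing X \<oplus> Z \<rightarrow> N +_Y M.\<close>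
definition corel_comp :: "('k::field, 'x) vs \<Rightarrow> ('k, 'y) vs \<Rightarrow> ('k, 'z) vs \<Rightarrow>
    ('k, 'x, 'y, 'a) cospan \<Rightarrow> ('k, 'y, 'z, 'b) cospan \<Rightarrow> ('k, 'x, 'z, ('a \<times> 'b) set) cospan" where
  "corel_comp X Y Z c1 c2 = (case c1 of (N, i, j) \<Rightarrow> case c2 of (M, i', j') \<Rightarrow>
     (let P = pushout_sp Y N M j i';
          l = po_inl Y N M j i';
          r = po_inr Y N M j i';
          I = {vadd P (l (i x)) (r (j' z)) | x z. x \<in> vcarrier X \<and> z \<in> vcarrier Z}
      in (P\<lparr>vcarrier := I\<rparr>, l \<circ> i, r \<circ> j')))"

text \<open>A linear relation U \<rightarrow> V is a linear subspace of U \<oplus> V; composition is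
relational composition (O), the identity is the diagonal.\<close>
definition linrel :: "('k::field, 'u) vs \<Rightarrow> ('k, 'v) vs \<Rightarrow> ('u \<times> 'v) set \<Rightarrow> bool" where
  "linrel U V L \<longleftrightarrow> subspace_of (dsum U V) L"

definition corel_rel :: "('k::field, 'u) vs \<Rightarrow> ('k, 'v) vs \<Rightarrow> ('k, 'u, 'v, 'a) cospan \<Rightarrow> ('u \<times> 'v) set" where
  "corel_rel U V c = (case c of (A, f, g) \<Rightarrow>
     {(u, v). (u, v) \<in> vcarrier (dsum U V) \<and> vadd A (f u) (vscale A (-1) (g v)) = vzero A})"

end

theory Submission
  imports Defs
begin


context fixes V :: "('k::field,'a) vs" assumes vs: "vecspace V"
begin
lemma vz: "vzero V \<in> vcarrier V" using vs unfolding vecspace_def by auto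
lemma vaddc: "x \<in> vcarrier V \<Longrightarrow> y \<in> vcarrier V \<Longrightarrow> vadd V x y \<in> vcarrier V" using vs unfolding vecspace_def by auto
lemma vscc: "x \<in> vcarrier V \<Longrightarrow> vscale V c x \<in> vcarrier V" using vs unfolding vecspace_def by auto
lemma vassoc: "x \<in> vcarrier V \<Longrightarrow> y \<in> vcarrier V \<Longrightarrow> z \<in> vcarrier V \<Longrightarrow> vadd V (vadd V x y) z = vadd V x (vadd V y z)" using vs unfolding vecspace_def by auto
lemma vcomm: "x \<in> vcarrier V \<Longrightarrow> y \<in> vcarrier V \<Longrightarrow> vadd V x y = vadd V y x" using vs unfolding vecspace_def by auto
lemma vlz: "x \<in> vcarrier V \<Longrightarrow> vadd V (vzero V) x = x" using vs unfolding vecspace_def by auto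
lemma vinv: "x \<in> vcarrier V \<Longrightarrow> \<exists>y\<in>vcarrier V. vadd V x y = vzero V" using vs unfolding vecspace_def by (elim conjE) (erule_tac x=x in ballE, auto)
lemma vsd: "x \<in> vcarrier V \<Longrightarrow> y \<in> vcarrier V \<Longrightarrow> vscale V c (vadd V x y) = vadd V (vscale V c x) (vscale V c y)" using vs unfolding vecspace_def by auto
lemma vsa: "x \<in> vcarrier V \<Longrightarrow> vscale V (a + b) x = vadd V (vscale V a x) (vscale V b x)" using vs unfolding vecspace_def by auto
lemma vsm: "x \<in> vcarrier V \<Longrightarrow> vscale V a (vscale V b x) = vscale V (a * b) x" using vs unfolding vecspace_def by auto
lemma vs1: "x \<in> vcarrier V \<Longrightarrow> vscale V 1 x = x" using vs unfolding vecspace_def by auto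

lemma vrz: "x \<in> vcarrier V \<Longrightarrow> vadd V x (vzero V) = x" using vcomm vlz vz by metis
lemma vlcomm: "x \<in> vcarrier V \<Longrightarrow> y \<in> vcarrier V \<Longrightarrow> z \<in> vcarrier V \<Longrightarrow> vadd V x (vadd V y z) = vadd V y (vadd V x z)"
  by (metis vassoc vcomm)
lemma vcancel: assumes "x \<in> vcarrier V" "y \<in> vcarrier V" "w \<in> vcarrier V" "vadd V x y = vadd V x w" shows "y = w"
proof -
  obtain n where n: "n \<in> vcarrier V" "vadd V x n = vzero V" using vinv assms by blast
  have "y = vadd V (vadd V n x) y" using n assms vcomm vlz by metis
  also have "\<dots> = vadd V (vadd V n x) w" using n assms vassoc by metis
  also have "\<dots> = w" using n assms vcomm vlz by metis
  finally show ?thesis .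
qed
lemma vsc0: assumes "x \<in> vcarrier V" shows "vscale V 0 x = vzero V"
proof -
  have "vadd V (vscale V 0 x) (vscale V 0 x) = vadd V (vscale V 0 x) (vzero V)"
    using vsa[OF assms, of 0 0] vrz vscc assms by simp
  thus ?thesis using vcancel vscc vz assms by blast
qed
lemma vneg: "x \<in> vcarrier V \<Longrightarrow> vadd V x (vscale V (-1) x) = vzero V"
  using vsa[of x 1 "-1"] vs1 vsc0 by simp
lemma vnegl: "x \<in> vcarrier V \<Longrightarrow> vadd V (vscale V (-1) x) x = vzero V"
  using vneg vcomm vscc by metis
lemma vscz: "vscale V c (vzero V) = vzero V"
proof -
  have "vadd V (vscale V c (vzero V)) (vscale V c (vzero V)) = vadd V (vscale V c (vzero V)) (vzero V)"
    using vsd[OF vz vz, of c] vrz vscc vz vlz by simp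
  thus ?thesis using vcancel vscc vz by blast
qed
lemma vsub0: assumes "x \<in> vcarrier V" "y \<in> vcarrier V" shows "vadd V x (vscale V (-1) y) = vzero V \<longleftrightarrow> x = y"
proof
  assume h: "vadd V x (vscale V (-1) y) = vzero V"
  have "x = vadd V x (vadd V (vscale V (-1) y) y)" using vnegl vrz assms by simp
  also have "\<dots> = y" using h vassoc vlz vscc assms by metis
  finally show "x = y" .
qed (use vneg assms in simp)
lemma vnegneg: "x \<in> vcarrier V \<Longrightarrow> vscale V (-1) (vscale V (-1) x) = x" using vsm vs1 by simp
lemma vnegsc: "x \<in> vcarrier V \<Longrightarrow> vscale V (-1) (vscale V c x) = vscale V (- c) x" using vsm by simp
lemmas vac = vassoc vcomm vlcomm vaddc vscc vz vlz vrz
end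

lemma lin_closed: "linmap V W f \<Longrightarrow> x \<in> vcarrier V \<Longrightarrow> f x \<in> vcarrier W" unfolding linmap_def by blast
lemma lin_add: "linmap V W f \<Longrightarrow> x \<in> vcarrier V \<Longrightarrow> y \<in> vcarrier V \<Longrightarrow> f (vadd V x y) = vadd W (f x) (f y)" unfolding linmap_def by blast
lemma lin_sc: "linmap V W f \<Longrightarrow> x \<in> vcarrier V \<Longrightarrow> f (vscale V c x) = vscale W c (f x)" unfolding linmap_def by blast
lemma lin_z: assumes "vecspace V" "vecspace W" "linmap V W f" shows "f (vzero V) = vzero W"
  using lin_sc[OF assms(3) vz[OF assms(1)], of 0] vsc0[OF assms(1)] vsc0[OF assms(2)] lin_closed[OF assms(3)] vz[OF assms(1)] by metis



lemma dsum_simps: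
  "vcarrier (dsum U W) = vcarrier U \<times> vcarrier W"
  "vadd (dsum U W) (a,b) (c,d) = (vadd U a c, vadd W b d)"
  "vzero (dsum U W) = (vzero U, vzero W)"
  "vscale (dsum U W) k (a,b) = (vscale U k a, vscale W k b)"
  by (simp_all add: dsum_def)

lemma dsum_vs: assumes "vecspace U" "vecspace W" shows "vecspace (dsum U W)"
proof -
  have inv: "\<exists>y\<in>vcarrier (dsum U W). vadd (dsum U W) x y = vzero (dsum U W)" if xin: "x \<in> vcarrier (dsum U W)" for x
  proof -
    obtain a b where x: "x = (a,b)" "a \<in> vcarrier U" "b \<in> vcarrier W" using xin by (auto simp: dsum_simps)
    show ?thesis using x assms vneg[OF assms(1)] vneg[OF assms(2)] vscc[OF assms(1)] vscc[OF assms(2)] by (intro bexI[of _ "(vscale U (-1) a, vscale W (-1) b)"]) (auto simp: dsum_simps)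
  qed
  note f = vz[OF assms(1)] vaddc[OF assms(1)] vscc[OF assms(1)] vz[OF assms(2)] vaddc[OF assms(2)] vscc[OF assms(2)]
  show ?thesis unfolding vecspace_def
    apply (intro conjI)
    subgoal by (simp add: dsum_simps f)
    subgoal by (auto simp: dsum_simps f)
    subgoal by (auto simp: dsum_simps f)
    subgoal by (auto simp: dsum_simps f vassoc[OF assms(1)] vassoc[OF assms(2)])
    subgoal by (clarsimp simp: dsum_simps, metis vcomm[OF assms(1)] vcomm[OF assms(2)])
    subgoal by (auto simp: dsum_simps f vlz[OF assms(1)] vlz[OF assms(2)])
    subgoal using inv by blast
    subgoal by (auto simp: dsum_simps f vsd[OF assms(1)] vsd[OF assms(2)])
    subgoal by (auto simp: dsum_simps f vsa[OF assms(1)] vsa[OF assms(2)])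
    subgoal by (auto simp: dsum_simps f vsm[OF assms(1)] vsm[OF assms(2)])
    subgoal by (auto simp: dsum_simps f vs1[OF assms(1)] vs1[OF assms(2)])
    done
qed

context fixes V :: "('k::field,'a) vs" and S assumes vs: "vecspace V" and sub: "subspace_of V S"
begin
lemma S_car: "s \<in> S \<Longrightarrow> s \<in> vcarrier V" using sub unfolding subspace_of_def by blast
lemma S_z: "vzero V \<in> S" using sub unfolding subspace_of_def by blast
lemma S_add: "s \<in> S \<Longrightarrow> t \<in> S \<Longrightarrow> vadd V s t \<in> S" using sub unfolding subspace_of_def by blast
lemma S_sc: "s \<in> S \<Longrightarrow> vscale V c s \<in> S" using sub unfolding subspace_of_def by blast

lemma q_mem: "a \<in> vcarrier V \<Longrightarrow> a \<in> vcoset V S a"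
  unfolding vcoset_def using S_z vrz[OF vs] by (metis image_eqI)
lemma q_shift: assumes a: "a \<in> vcarrier V" and s: "s \<in> S" shows "vcoset V S (vadd V a s) = vcoset V S a"
proof
  show "vcoset V S (vadd V a s) \<subseteq> vcoset V S a"
    unfolding vcoset_def using a s S_car S_add vassoc[OF vs] by (auto intro!: image_eqI)
  show "vcoset V S a \<subseteq> vcoset V S (vadd V a s)"
  proof
    fix x assume "x \<in> vcoset V S a"
    then obtain t where t: "t \<in> S" "x = vadd V a t" unfolding vcoset_def by auto
    have sc: "s \<in> vcarrier V" "t \<in> vcarrier V" using s t S_car by auto
    have "x = vadd V (vadd V a s) (vadd V (vscale V (-1) s) t)"
      using t sc a vassoc[OF vs] vneg[OF vs] vlz[OF vs] vscc[OF vs] vaddc[OF vs] by metis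
    moreover have "vadd V (vscale V (-1) s) t \<in> S" using S_add S_sc s t by blast
    ultimately show "x \<in> vcoset V S (vadd V a s)" unfolding vcoset_def by blast
  qed
qed
lemma q_eq: assumes "a \<in> vcarrier V" "b \<in> vcarrier V"
  shows "vcoset V S a = vcoset V S b \<longleftrightarrow> vadd V a (vscale V (-1) b) \<in> S"
proof
  assume "vcoset V S a = vcoset V S b"
  then have "a \<in> vcoset V S b" using q_mem assms by auto
  then obtain s where s: "s \<in> S" "a = vadd V b s" unfolding vcoset_def by auto
  have "vadd V a (vscale V (-1) b) = s" using s S_car assms vac[OF vs] vneg[OF vs] by (metis vlcomm[OF vs] vscc[OF vs])
  thus "vadd V a (vscale V (-1) b) \<in> S" using s by simp
next
  assume h: "vadd V a (vscale V (-1) b) \<in> S"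
  have "a = vadd V b (vadd V a (vscale V (-1) b))" using assms vac[OF vs] vnegl[OF vs] by (metis vscc[OF vs])
  thus "vcoset V S a = vcoset V S b" using q_shift[OF assms(2) h] by simp
qed
lemma q_elem: assumes "x \<in> vcoset V S a" "a \<in> vcarrier V" shows "x \<in> vcarrier V" "vcoset V S x = vcoset V S a"
proof -
  obtain s where s: "s \<in> S" "x = vadd V a s" using assms(1) unfolding vcoset_def by auto
  show "x \<in> vcarrier V" using s assms S_car vaddc[OF vs] by auto
  show "vcoset V S x = vcoset V S a" using s assms q_shift by auto
qed
lemma q_some: assumes "a \<in> vcarrier V"
  shows "(SOME x. x \<in> vcoset V S a) \<in> vcoset V S a"
  using assms q_mem by (meson someI)
lemma q_carrier: "vcarrier (quot V S) = vcoset V S ` vcarrier V" by (simp add: quot_def)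
lemma q_zero: "vzero (quot V S) = vcoset V S (vzero V)" by (simp add: quot_def)
lemma q_add: assumes a: "a \<in> vcarrier V" and b: "b \<in> vcarrier V"
  shows "vadd (quot V S) (vcoset V S a) (vcoset V S b) = vcoset V S (vadd V a b)"
proof -
  obtain s where s: "s \<in> S" "(SOME x. x \<in> vcoset V S a) = vadd V a s" using q_some[OF a] unfolding vcoset_def by auto
  obtain t where t: "t \<in> S" "(SOME x. x \<in> vcoset V S b) = vadd V b t" using q_some[OF b] unfolding vcoset_def by auto
  have "vadd V (vadd V a s) (vadd V b t) = vadd V (vadd V a b) (vadd V s t)"
    using a b s t S_car vac[OF vs] by metis
  thus ?thesis using q_shift s t S_add a b vaddc[OF vs] by (simp add: quot_def)
qed
lemma q_sc: assumes a: "a \<in> vcarrier V"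
  shows "vscale (quot V S) c (vcoset V S a) = vcoset V S (vscale V c a)"
proof -
  obtain s where s: "s \<in> S" "(SOME x. x \<in> vcoset V S a) = vadd V a s" using q_some[OF a] unfolding vcoset_def by auto
  have "vscale V c (vadd V a s) = vadd V (vscale V c a) (vscale V c s)" using vsd[OF vs] a s S_car by blast
  thus ?thesis using q_shift s S_sc a vscc[OF vs] by (simp add: quot_def)
qed
lemma q_vs: "vecspace (quot V S)"
proof -
  have inv: "\<exists>y\<in>vcarrier (quot V S). vadd (quot V S) x y = vzero (quot V S)" if xin: "x \<in> vcarrier (quot V S)" for x
  proof -
    obtain a where x: "x = vcoset V S a" "a \<in> vcarrier V" using xin by (auto simp: q_carrier)
    show ?thesis using x vneg[OF vs] vscc[OF vs]
      by (intro bexI[of _ "vcoset V S (vscale V (-1) a)"]) (auto simp: q_carrier q_add q_zero)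
  qed
  note f = vz[OF vs] vaddc[OF vs] vscc[OF vs]
  show ?thesis unfolding vecspace_def
    apply (intro conjI)
    subgoal by (simp add: q_carrier q_zero f)
    subgoal by (auto simp: q_carrier q_add f)
    subgoal by (auto simp: q_carrier q_sc f)
    subgoal by (auto simp: q_carrier q_add f vassoc[OF vs])
    subgoal by (clarsimp simp: q_carrier q_add, metis vcomm[OF vs])
    subgoal by (auto simp: q_carrier q_add q_zero f vlz[OF vs])
    subgoal using inv by blast
    subgoal by (auto simp: q_carrier q_add q_sc f vsd[OF vs])
    subgoal by (auto simp: q_carrier q_add q_sc f vsa[OF vs])
    subgoal by (auto simp: q_carrier q_sc f vsm[OF vs])
    subgoal by (auto simp: q_carrier q_sc f vs1[OF vs])
    done
qed
end



lemma po_sub: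
  assumes Y: "vecspace Y" and N: "vecspace N" and M: "vecspace M" and f: "linmap Y N f" and g: "linmap Y M g"
  shows "subspace_of (dsum N M) (po_ker Y N M f g)"
  unfolding subspace_of_def
proof (intro conjI ballI allI)
  show "po_ker Y N M f g \<subseteq> vcarrier (dsum N M)"
    unfolding po_ker_def using lin_closed[OF f] lin_closed[OF g] vscc[OF M] by (auto simp: dsum_simps)
  show "vzero (dsum N M) \<in> po_ker Y N M f g"
    unfolding po_ker_def using lin_z[OF Y N f] lin_z[OF Y M g] vscz[OF M] vz[OF Y]
    by (auto simp: dsum_simps intro!: exI[of _ "vzero Y"])
next
  fix a b assume a: "a \<in> po_ker Y N M f g" and b: "b \<in> po_ker Y N M f g"
  obtain y1 where y1: "y1 \<in> vcarrier Y" "a = (f y1, vscale M (-1) (g y1))" using a unfolding po_ker_def by auto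
  obtain y2 where y2: "y2 \<in> vcarrier Y" "b = (f y2, vscale M (-1) (g y2))" using b unfolding po_ker_def by auto
  have "vadd (dsum N M) a b = (f (vadd Y y1 y2), vscale M (-1) (g (vadd Y y1 y2)))"
    using y1 y2 by (simp add: dsum_simps lin_add[OF f] lin_add[OF g] vsd[OF M] lin_closed[OF g])
  thus "vadd (dsum N M) a b \<in> po_ker Y N M f g" unfolding po_ker_def using y1 y2 vaddc[OF Y] by blast
next
  fix c a assume a: "a \<in> po_ker Y N M f g"
  obtain y1 where y1: "y1 \<in> vcarrier Y" "a = (f y1, vscale M (-1) (g y1))" using a unfolding po_ker_def by auto
  have "vscale (dsum N M) c a = (f (vscale Y c y1), vscale M (-1) (g (vscale Y c y1)))"
    using y1 by (simp add: dsum_simps lin_sc[OF f] lin_sc[OF g] vsm[OF M] lin_closed[OF g] mult.commute)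
  thus "vscale (dsum N M) c a \<in> po_ker Y N M f g" unfolding po_ker_def using y1 vscc[OF Y] by blast
qed

lemma part1:
  assumes Y: "vecspace Y" and N: "vecspace N" and M: "vecspace M" and f: "linmap Y N f" and g: "linmap Y M g"
    and inj: "inj_on f (vcarrier Y)"
  shows "inj_on (po_inr Y N M f g) (vcarrier M)"
proof (rule inj_onI)
  fix m1 m2 assume m1: "m1 \<in> vcarrier M" and m2: "m2 \<in> vcarrier M"
    and eq: "po_inr Y N M f g m1 = po_inr Y N M f g m2"
  have D: "vecspace (dsum N M)" using dsum_vs N M by blast
  have S: "subspace_of (dsum N M) (po_ker Y N M f g)" using po_sub assms by blast
  have c1: "(vzero N, m1) \<in> vcarrier (dsum N M)" "(vzero N, m2) \<in> vcarrier (dsum N M)"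
    using m1 m2 vz[OF N] by (auto simp: dsum_simps)
  have "vadd (dsum N M) (vzero N, m1) (vscale (dsum N M) (-1) (vzero N, m2)) \<in> po_ker Y N M f g"
    using eq q_eq[OF D S c1] unfolding po_inr_def by simp
  then have "(vzero N, vadd M m1 (vscale M (-1) m2)) \<in> po_ker Y N M f g"
    by (simp add: dsum_simps vscz[OF N] vlz[OF N] vz[OF N])
  then obtain y where y: "y \<in> vcarrier Y" "f y = vzero N" "vscale M (-1) (g y) = vadd M m1 (vscale M (-1) m2)"
    unfolding po_ker_def by auto
  have "y = vzero Y" using inj y lin_z[OF Y N f] vz[OF Y] by (metis inj_on_def)
  then have "vadd M m1 (vscale M (-1) m2) = vzero M" using y lin_z[OF Y M g] vscz[OF M] by simp
  thus "m1 = m2" using vsub0[OF M m1 m2] by simp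
qed



lemma corel_rel_eq:
  assumes A: "vecspace A" and f: "linmap U A f" and g: "linmap V A g"
  shows "corel_rel U V (A,f,g) = {(u,v). u \<in> vcarrier U \<and> v \<in> vcarrier V \<and> f u = g v}"
  unfolding corel_rel_def using vsub0[OF A] lin_closed[OF f] lin_closed[OF g] by (auto simp: dsum_simps)

lemma epi_corel_unf: "epi_corel U V (A,f,g) \<longleftrightarrow> vecspace A \<and> linmap U A f \<and> linmap V A g \<and>
     (\<forall>a\<in>vcarrier A. \<exists>u\<in>vcarrier U. \<exists>v\<in>vcarrier V. a = vadd A (f u) (g v))"
  by (simp add: epi_corel_def)

lemma part2a:
  assumes U: "vecspace U" and V: "vecspace V" and c: "epi_corel U V c"
  shows "linrel U V (corel_rel U V c)"
proof -
  obtain A f g where cc: "c = (A,f,g)" by (cases c) auto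
  have A: "vecspace A" and f: "linmap U A f" and g: "linmap V A g" using c unfolding cc epi_corel_unf by auto
  show ?thesis unfolding cc linrel_def corel_rel_eq[OF A f g] subspace_of_def
    using lin_z[OF U A f] lin_z[OF V A g] vz[OF U] vz[OF V] lin_add[OF f] lin_add[OF g] lin_sc[OF f] lin_sc[OF g]
      vaddc[OF U] vaddc[OF V] vscc[OF U] vscc[OF V]
    by (auto simp: dsum_simps)
qed

lemma id_linmap: "linmap X X id" unfolding linmap_def by simp

lemma part2d:
  assumes X: "vecspace X"
  shows "epi_corel X X (corel_id X) \<and> corel_rel X X (corel_id X) = Id_on (vcarrier X)"
proof
  show "epi_corel X X (corel_id X)" unfolding corel_id_def epi_corel_unf
  proof (intro conjI X id_linmap ballI)
    fix a assume "a \<in> vcarrier X"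
    thus "\<exists>u\<in>vcarrier X. \<exists>v\<in>vcarrier X. a = vadd X (id u) (id v)"
      using vz[OF X] vrz[OF X] by (metis id_apply)
  qed
  show "corel_rel X X (corel_id X) = Id_on (vcarrier X)" unfolding corel_id_def
    using corel_rel_eq[OF X id_linmap id_linmap] by (auto simp: Id_on_def)
qed

lemma part2c:
  assumes U: "vecspace U" and V: "vecspace V" and L: "linrel U V L"
  shows "\<exists>c :: ('k::field, 'u, 'v, ('u \<times> 'v) set) cospan. epi_corel U V c \<and> corel_rel U V c = L"
proof -
  let ?D = "dsum U V"
  have D: "vecspace ?D" using dsum_vs U V by blast
  have S: "subspace_of ?D L" using L unfolding linrel_def .
  define A where "A = quot ?D L"
  define f where "f = (\<lambda>u. vcoset ?D L (u, vzero V))"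
  define g where "g = (\<lambda>v. vcoset ?D L (vzero U, vscale V (-1) v))"
  have A: "vecspace A" unfolding A_def using q_vs[OF D S] .
  note zU = vz[OF U] and zV = vz[OF V]
  have f: "linmap U A f" unfolding linmap_def A_def f_def
  proof (intro conjI ballI allI)
    fix x assume "x \<in> vcarrier U" thus "vcoset ?D L (x, vzero V) \<in> vcarrier (quot ?D L)"
      using q_carrier[OF D S] zV by (auto simp: dsum_simps)
  next
    fix x y assume "x \<in> vcarrier U" "y \<in> vcarrier U"
    thus "vcoset ?D L (vadd U x y, vzero V) = vadd (quot ?D L) (vcoset ?D L (x, vzero V)) (vcoset ?D L (y, vzero V))"
      using q_add[OF D S] zV vlz[OF V] by (auto simp: dsum_simps)
  next
    fix c x assume "x \<in> vcarrier U"
    thus "vcoset ?D L (vscale U c x, vzero V) = vscale (quot ?D L) c (vcoset ?D L (x, vzero V))"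
      using q_sc[OF D S] zV vscz[OF V] by (auto simp: dsum_simps)
  qed
  have g: "linmap V A g" unfolding linmap_def A_def g_def
  proof (intro conjI ballI allI)
    fix x assume "x \<in> vcarrier V" thus "vcoset ?D L (vzero U, vscale V (-1) x) \<in> vcarrier (quot ?D L)"
      using q_carrier[OF D S] zU vscc[OF V] by (auto simp: dsum_simps)
  next
    fix x y assume "x \<in> vcarrier V" "y \<in> vcarrier V"
    thus "vcoset ?D L (vzero U, vscale V (-1) (vadd V x y)) = vadd (quot ?D L) (vcoset ?D L (vzero U, vscale V (-1) x)) (vcoset ?D L (vzero U, vscale V (-1) y))"
      using q_add[OF D S] zU vlz[OF U] vscc[OF V] vsd[OF V] by (auto simp: dsum_simps)
  next
    fix c x assume "x \<in> vcarrier V"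
    thus "vcoset ?D L (vzero U, vscale V (-1) (vscale V c x)) = vscale (quot ?D L) c (vcoset ?D L (vzero U, vscale V (-1) x))"
      using q_sc[OF D S] zU vscz[OF U] vscc[OF V] vsm[OF V] by (auto simp: dsum_simps mult.commute)
  qed
  have epi: "epi_corel U V (A,f,g)" unfolding epi_corel_unf
  proof (intro conjI A f g ballI)
    fix a assume "a \<in> vcarrier A"
    then obtain u v where uv: "u \<in> vcarrier U" "v \<in> vcarrier V" "a = vcoset ?D L (u,v)"
      unfolding A_def q_carrier[OF D S] by (auto simp: dsum_simps)
    have "a = vadd A (f u) (g (vscale V (-1) v))"
      unfolding A_def f_def g_def using uv q_add[OF D S] zU zV vnegneg[OF V] vscc[OF V] vrz[OF U] vlz[OF V]
      by (simp add: dsum_simps)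
    thus "\<exists>u\<in>vcarrier U. \<exists>v\<in>vcarrier V. a = vadd A (f u) (g v)" using uv vscc[OF V] by blast
  qed
  have "corel_rel U V (A,f,g) = L"
  proof -
    have "f u = g v \<longleftrightarrow> (u,v) \<in> L" if uv: "u \<in> vcarrier U" "v \<in> vcarrier V" for u v
    proof -
      have c1: "(u, vzero V) \<in> vcarrier ?D" "(vzero U, vscale V (-1) v) \<in> vcarrier ?D"
        using uv zU zV vscc[OF V] by (auto simp: dsum_simps)
      show ?thesis unfolding f_def g_def q_eq[OF D S c1]
        using uv vscz[OF U] vrz[OF U] vnegneg[OF V] vlz[OF V] zV by (simp add: dsum_simps)
    qed
    moreover have "L \<subseteq> vcarrier ?D" using S unfolding subspace_of_def by blast
    ultimately show ?thesis unfolding corel_rel_eq[OF A f g] by (auto simp: dsum_simps)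
  qed
  thus ?thesis using epi by blast
qed



lemma vtrans:
  assumes A: "vecspace A" and c: "x1 \<in> vcarrier A" "y1 \<in> vcarrier A" "x2 \<in> vcarrier A" "y2 \<in> vcarrier A"
    and e: "vadd A x1 y1 = vadd A x2 y2"
  shows "vadd A x1 (vscale A (-1) x2) = vadd A y2 (vscale A (-1) y1)"
proof -
  note cl = c vscc[OF A] vaddc[OF A] vz[OF A]
  have "vadd A x1 (vscale A (-1) x2) = vadd A x1 (vadd A (vscale A (-1) x2) (vadd A y1 (vscale A (-1) y1)))"
    using cl vneg[OF A] vrz[OF A] by simp
  also have "\<dots> = vadd A (vadd A x1 y1) (vadd A (vscale A (-1) x2) (vscale A (-1) y1))"
    using cl vassoc[OF A] vlcomm[OF A] by metis
  also have "\<dots> = vadd A (vadd A x2 y2) (vadd A (vscale A (-1) x2) (vscale A (-1) y1))" using e by simp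
  also have "\<dots> = vadd A y2 (vadd A (vadd A x2 (vscale A (-1) x2)) (vscale A (-1) y1))"
    using cl vassoc[OF A] vcomm[OF A] by metis
  also have "\<dots> = vadd A y2 (vscale A (-1) y1)" using cl vneg[OF A] vlz[OF A] by simp
  finally show ?thesis .
qed

lemma vtrans_conv:
  assumes A: "vecspace A" and c: "x1 \<in> vcarrier A" "y1 \<in> vcarrier A" "x2 \<in> vcarrier A" "y2 \<in> vcarrier A"
    and e: "vadd A x1 (vscale A (-1) x2) = vadd A y2 (vscale A (-1) y1)"
  shows "vadd A x1 y1 = vadd A x2 y2"
proof -
  note cl = c vscc[OF A]
  have "vadd A x1 (vscale A (-1) y2) = vadd A (vscale A (-1) y1) (vscale A (-1) (vscale A (-1) x2))"
    using vtrans[OF A, of x1 "vscale A (-1) x2" y2 "vscale A (-1) y1"] cl e by blast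
  hence "vadd A x1 (vscale A (-1) y2) = vadd A (vscale A (-1) y1) x2" using vnegneg[OF A] c by simp
  hence "vadd A x1 (vscale A (-1) (vscale A (-1) y1)) = vadd A x2 (vscale A (-1) (vscale A (-1) y2))"
    using vtrans[OF A, of x1 "vscale A (-1) y2" "vscale A (-1) y1" x2] cl by blast
  thus ?thesis using vnegneg[OF A] c by simp
qed

lemma vswap4:
  assumes A: "vecspace A" and c: "p \<in> vcarrier A" "q \<in> vcarrier A" "r \<in> vcarrier A" "s \<in> vcarrier A"
  shows "vadd A (vadd A p q) (vadd A r s) = vadd A (vadd A p r) (vadd A q s)"
proof -
  have "vadd A (vadd A p q) (vadd A r s) = vadd A p (vadd A q (vadd A r s))"
    using c vassoc[OF A] vaddc[OF A] by simp
  also have "vadd A q (vadd A r s) = vadd A r (vadd A q s)" using c vlcomm[OF A] by simp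
  also have "vadd A p (vadd A r (vadd A q s)) = vadd A (vadd A p r) (vadd A q s)"
    using c vassoc[OF A] vaddc[OF A] by simp
  finally show ?thesis .
qed

lemma wd:
  assumes U: "vecspace U" and V: "vecspace V" and A: "vecspace A" and B: "vecspace B"
    and f: "linmap U A f" and g: "linmap V A g" and f': "linmap U B f'" and g': "linmap V B g'"
    and R: "\<And>u v. u \<in> vcarrier U \<Longrightarrow> v \<in> vcarrier V \<Longrightarrow> f u = g v \<Longrightarrow> f' u = g' v"
    and c: "u1 \<in> vcarrier U" "u2 \<in> vcarrier U" "v1 \<in> vcarrier V" "v2 \<in> vcarrier V"
    and e: "vadd A (f u1) (g v1) = vadd A (f u2) (g v2)"
  shows "vadd B (f' u1) (g' v1) = vadd B (f' u2) (g' v2)"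
proof -
  have cu: "vadd U u1 (vscale U (-1) u2) \<in> vcarrier U" using c vaddc[OF U] vscc[OF U] by blast
  have cv: "vadd V v2 (vscale V (-1) v1) \<in> vcarrier V" using c vaddc[OF V] vscc[OF V] by blast
  have "vadd A (f u1) (vscale A (-1) (f u2)) = vadd A (g v2) (vscale A (-1) (g v1))"
    using vtrans[OF A _ _ _ _ e] c lin_closed[OF f] lin_closed[OF g] by blast
  hence "f (vadd U u1 (vscale U (-1) u2)) = g (vadd V v2 (vscale V (-1) v1))"
    using c lin_add[OF f] lin_add[OF g] lin_sc[OF f] lin_sc[OF g] vscc[OF U] vscc[OF V] by simp
  hence "f' (vadd U u1 (vscale U (-1) u2)) = g' (vadd V v2 (vscale V (-1) v1))" using R cu cv by blast
  hence "vadd B (f' u1) (vscale B (-1) (f' u2)) = vadd B (g' v2) (vscale B (-1) (g' v1))"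
    using c lin_add[OF f'] lin_add[OF g'] lin_sc[OF f'] lin_sc[OF g'] vscc[OF U] vscc[OF V] by simp
  thus ?thesis using vtrans_conv[OF B] c lin_closed[OF f'] lin_closed[OF g'] by blast
qed




lemma part2b:
  assumes U: "vecspace U" and V: "vecspace V" and ec: "epi_corel U V c" and ed: "epi_corel U V d"
  shows "corel_rel U V c = corel_rel U V d \<longleftrightarrow> cospan_iso U V c d"
proof -
  obtain A f g where cc: "c = (A,f,g)" by (cases c) auto
  obtain B f' g' where dd: "d = (B,f',g')" by (cases d) auto
  have A: "vecspace A" and f: "linmap U A f" and g: "linmap V A g"
    and epA: "\<forall>a\<in>vcarrier A. \<exists>u\<in>vcarrier U. \<exists>v\<in>vcarrier V. a = vadd A (f u) (g v)"
    using ec unfolding cc epi_corel_unf by auto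
  have B: "vecspace B" and f': "linmap U B f'" and g': "linmap V B g'"
    and epB: "\<forall>a\<in>vcarrier B. \<exists>u\<in>vcarrier U. \<exists>v\<in>vcarrier V. a = vadd B (f' u) (g' v)"
    using ed unfolding dd epi_corel_unf by auto
  have iso: "cospan_iso U V c d \<longleftrightarrow> (\<exists>\<phi>. linmap A B \<phi> \<and> bij_betw \<phi> (vcarrier A) (vcarrier B) \<and>
          (\<forall>u\<in>vcarrier U. \<phi> (f u) = f' u) \<and> (\<forall>v\<in>vcarrier V. \<phi> (g v) = g' v))"
    unfolding cc dd cospan_iso_def by simp
  have rel: "corel_rel U V c = corel_rel U V d \<longleftrightarrow>
     (\<forall>u\<in>vcarrier U. \<forall>v\<in>vcarrier V. f u = g v \<longleftrightarrow> f' u = g' v)"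
    unfolding cc dd corel_rel_eq[OF A f g] corel_rel_eq[OF B f' g'] by blast
  show ?thesis unfolding iso rel
  proof
    assume R: "\<forall>u\<in>vcarrier U. \<forall>v\<in>vcarrier V. f u = g v \<longleftrightarrow> f' u = g' v"
    define \<phi> where "\<phi> a = (SOME b. \<exists>u\<in>vcarrier U. \<exists>v\<in>vcarrier V. a = vadd A (f u) (g v) \<and> b = vadd B (f' u) (g' v))" for a
    have peq: "\<phi> (vadd A (f u) (g v)) = vadd B (f' u) (g' v)" if uv: "u \<in> vcarrier U" "v \<in> vcarrier V" for u v
    proof -
      let ?P = "\<lambda>b. \<exists>u'\<in>vcarrier U. \<exists>v'\<in>vcarrier V. vadd A (f u) (g v) = vadd A (f u') (g v') \<and> b = vadd B (f' u') (g' v')"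
      have "?P (\<phi> (vadd A (f u) (g v)))" unfolding \<phi>_def by (rule someI[of ?P]) (use uv in blast)
      then obtain u' v' where uv': "u' \<in> vcarrier U" "v' \<in> vcarrier V"
        "vadd A (f u) (g v) = vadd A (f u') (g v')" "\<phi> (vadd A (f u) (g v)) = vadd B (f' u') (g' v')" by blast
      show ?thesis using wd[OF U V A B f g f' g' _ uv(1) uv'(1) uv(2) uv'(2) uv'(3)] R uv' by metis
    qed
    have R2: "\<And>u v. u \<in> vcarrier U \<Longrightarrow> v \<in> vcarrier V \<Longrightarrow> f' u = g' v \<Longrightarrow> f u = g v" using R by blast
    note clA = lin_closed[OF f] lin_closed[OF g] and clB = lin_closed[OF f'] lin_closed[OF g']
    have lin: "linmap A B \<phi>" unfolding linmap_def
    proof (intro conjI ballI allI)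
      fix x assume "x \<in> vcarrier A"
      then obtain u v where uv: "u \<in> vcarrier U" "v \<in> vcarrier V" "x = vadd A (f u) (g v)" using epA by blast
      show "\<phi> x \<in> vcarrier B" using uv peq clB vaddc[OF B] by simp
    next
      fix x y assume xy: "x \<in> vcarrier A" "y \<in> vcarrier A"
      obtain u v where "u \<in> vcarrier U" "v \<in> vcarrier V" "x = vadd A (f u) (g v)" using epA xy by blast
      moreover obtain u2 v2 where "u2 \<in> vcarrier U" "v2 \<in> vcarrier V" "y = vadd A (f u2) (g v2)" using epA xy by blast
      ultimately have uv: "u \<in> vcarrier U" "v \<in> vcarrier V" "x = vadd A (f u) (g v)"
        "u2 \<in> vcarrier U" "v2 \<in> vcarrier V" "y = vadd A (f u2) (g v2)" by auto
      have "vadd A x y = vadd A (f (vadd U u u2)) (g (vadd V v v2))"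
        using uv vswap4[OF A clA(1)[OF uv(1)] clA(2)[OF uv(2)] clA(1)[OF uv(4)] clA(2)[OF uv(5)]] lin_add[OF f] lin_add[OF g] by simp
      moreover have "vadd B (\<phi> x) (\<phi> y) = vadd B (f' (vadd U u u2)) (g' (vadd V v v2))"
        using uv peq vswap4[OF B clB(1)[OF uv(1)] clB(2)[OF uv(2)] clB(1)[OF uv(4)] clB(2)[OF uv(5)]] lin_add[OF f'] lin_add[OF g'] by simp
      ultimately show "\<phi> (vadd A x y) = vadd B (\<phi> x) (\<phi> y)" using peq uv vaddc[OF U] vaddc[OF V] by simp
    next
      fix k x assume "x \<in> vcarrier A"
      then obtain u v where uv: "u \<in> vcarrier U" "v \<in> vcarrier V" "x = vadd A (f u) (g v)" using epA by blast
      have "vscale A k x = vadd A (f (vscale U k u)) (g (vscale V k v))"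
        using uv vsd[OF A] clA lin_sc[OF f] lin_sc[OF g] by simp
      moreover have "vscale B k (\<phi> x) = vadd B (f' (vscale U k u)) (g' (vscale V k v))"
        using uv peq vsd[OF B] clB lin_sc[OF f'] lin_sc[OF g'] by simp
      ultimately show "\<phi> (vscale A k x) = vscale B k (\<phi> x)" using peq uv vscc[OF U] vscc[OF V] by simp
    qed
    have bij: "bij_betw \<phi> (vcarrier A) (vcarrier B)" unfolding bij_betw_def
    proof
      show "inj_on \<phi> (vcarrier A)"
      proof (rule inj_onI)
        fix x y assume xy: "x \<in> vcarrier A" "y \<in> vcarrier A" and e: "\<phi> x = \<phi> y"
        obtain u v where "u \<in> vcarrier U" "v \<in> vcarrier V" "x = vadd A (f u) (g v)" using epA xy by blast
        moreover obtain u2 v2 where "u2 \<in> vcarrier U" "v2 \<in> vcarrier V" "y = vadd A (f u2) (g v2)" using epA xy by blast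
        ultimately have uv: "u \<in> vcarrier U" "v \<in> vcarrier V" "x = vadd A (f u) (g v)"
          "u2 \<in> vcarrier U" "v2 \<in> vcarrier V" "y = vadd A (f u2) (g v2)" by auto
        have "vadd B (f' u) (g' v) = vadd B (f' u2) (g' v2)" using e uv peq by simp
        hence "vadd A (f u) (g v) = vadd A (f u2) (g v2)" using wd[OF U V B A f' g' f g R2 uv(1) uv(4) uv(2) uv(5)] by blast
        thus "x = y" using uv(3,6) by simp
      qed
      show "\<phi> ` vcarrier A = vcarrier B"
      proof
        show "\<phi> ` vcarrier A \<subseteq> vcarrier B" using lin unfolding linmap_def by blast
        show "vcarrier B \<subseteq> \<phi> ` vcarrier A"
        proof
          fix b assume "b \<in> vcarrier B"
          then obtain u v where uv: "u \<in> vcarrier U" "v \<in> vcarrier V" "b = vadd B (f' u) (g' v)" using epB by blast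
          have "b = \<phi> (vadd A (f u) (g v))" using peq uv by simp
          moreover have "vadd A (f u) (g v) \<in> vcarrier A" using clA uv vaddc[OF A] by blast
          ultimately show "b \<in> \<phi> ` vcarrier A" by blast
        qed
      qed
    qed
    have "\<forall>u\<in>vcarrier U. \<phi> (f u) = f' u"
    proof
      fix u assume u: "u \<in> vcarrier U"
      have "f u = vadd A (f u) (g (vzero V))" using lin_z[OF V A g] vrz[OF A] clA u by simp
      thus "\<phi> (f u) = f' u" using peq[OF u vz[OF V]] lin_z[OF V B g'] vrz[OF B] clB u by simp
    qed
    moreover have "\<forall>v\<in>vcarrier V. \<phi> (g v) = g' v"
    proof
      fix v assume v: "v \<in> vcarrier V"
      have "g v = vadd A (f (vzero U)) (g v)" using lin_z[OF U A f] vlz[OF A] clA v by simp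
      thus "\<phi> (g v) = g' v" using peq[OF vz[OF U] v] lin_z[OF U B f'] vlz[OF B] clB v by simp
    qed
    ultimately show "\<exists>\<phi>. linmap A B \<phi> \<and> bij_betw \<phi> (vcarrier A) (vcarrier B) \<and>
          (\<forall>u\<in>vcarrier U. \<phi> (f u) = f' u) \<and> (\<forall>v\<in>vcarrier V. \<phi> (g v) = g' v)"
      using lin bij by blast
  next
    assume "\<exists>\<phi>. linmap A B \<phi> \<and> bij_betw \<phi> (vcarrier A) (vcarrier B) \<and>
          (\<forall>u\<in>vcarrier U. \<phi> (f u) = f' u) \<and> (\<forall>v\<in>vcarrier V. \<phi> (g v) = g' v)"
    then obtain \<phi> where p: "bij_betw \<phi> (vcarrier A) (vcarrier B)"
      "\<forall>u\<in>vcarrier U. \<phi> (f u) = f' u" "\<forall>v\<in>vcarrier V. \<phi> (g v) = g' v" by blast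
    have inj: "inj_on \<phi> (vcarrier A)" using p(1) bij_betw_def by blast
    show "\<forall>u\<in>vcarrier U. \<forall>v\<in>vcarrier V. f u = g v \<longleftrightarrow> f' u = g' v"
    proof (intro ballI)
      fix u v assume u: "u \<in> vcarrier U" and v: "v \<in> vcarrier V"
      have "f u = g v \<longleftrightarrow> \<phi> (f u) = \<phi> (g v)" using inj lin_closed[OF f u] lin_closed[OF g v] inj_on_eq_iff by metis
      thus "f u = g v \<longleftrightarrow> f' u = g' v" using p u v by simp
    qed
  qed
qed



lemma upd: "vcarrier (W\<lparr>vcarrier := I\<rparr>) = I" "vadd (W\<lparr>vcarrier := I\<rparr>) = vadd W"
  "vzero (W\<lparr>vcarrier := I\<rparr>) = vzero W" "vscale (W\<lparr>vcarrier := I\<rparr>) = vscale W" by simp_all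

lemma sub_vs:
  assumes W: "vecspace W" and S: "subspace_of W I"
  shows "vecspace (W\<lparr>vcarrier := I\<rparr>)"
proof -
  have SC: "I \<subseteq> vcarrier W" and Sz: "vzero W \<in> I" and Sa: "\<And>x y. x \<in> I \<Longrightarrow> y \<in> I \<Longrightarrow> vadd W x y \<in> I"
    and Ss: "\<And>c x. x \<in> I \<Longrightarrow> vscale W c x \<in> I" using S unfolding subspace_of_def by auto
  show ?thesis unfolding vecspace_def
    apply (simp only: upd)
    apply (intro conjI)
    subgoal using Sz .
    subgoal using Sa by blast
    subgoal using Ss by blast
    subgoal using SC vassoc[OF W] by blast
    subgoal using SC vcomm[OF W] by blast
    subgoal using SC vlz[OF W] by blast
    subgoal using SC Ss vneg[OF W] by blast
    subgoal using SC vsd[OF W] by blast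
    subgoal using SC vsa[OF W] by blast
    subgoal using SC vsm[OF W] by blast
    subgoal using SC vs1[OF W] by blast
    done
qed

lemma comp_unf: "corel_comp X Y Z (N,i,j) (M,i',j') =
   (let P = pushout_sp Y N M j i'; l = po_inl Y N M j i'; r = po_inr Y N M j i';
        I = {vadd P (l (i x)) (r (j' z)) | x z. x \<in> vcarrier X \<and> z \<in> vcarrier Z}
    in (P\<lparr>vcarrier := I\<rparr>, l \<circ> i, r \<circ> j'))"
  by (simp add: corel_comp_def)

lemma part2e:
  assumes X: "vecspace X" and Y: "vecspace Y" and Z: "vecspace Z"
    and e1: "epi_corel X Y c1" and e2: "epi_corel Y Z c2"
  shows "epi_corel X Z (corel_comp X Y Z c1 c2) \<and>
         corel_rel X Z (corel_comp X Y Z c1 c2) = corel_rel X Y c1 O corel_rel Y Z c2"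
proof -
  obtain N i j where cc1: "c1 = (N,i,j)" by (cases c1) auto
  obtain M i' j' where cc2: "c2 = (M,i',j')" by (cases c2) auto
  have N: "vecspace N" and i: "linmap X N i" and j: "linmap Y N j" using e1 unfolding cc1 epi_corel_unf by auto
  have M: "vecspace M" and i': "linmap Y M i'" and j': "linmap Z M j'" using e2 unfolding cc2 epi_corel_unf by auto
  define D where "D = dsum N M"
  define K where "K = po_ker Y N M j i'"
  define P where "P = pushout_sp Y N M j i'"
  define l where "l = po_inl Y N M j i'"
  define r where "r = po_inr Y N M j i'"
  define I where "I = {vadd P (l (i x)) (r (j' z)) | x z. x \<in> vcarrier X \<and> z \<in> vcarrier Z}"
  have cdef: "corel_comp X Y Z c1 c2 = (P\<lparr>vcarrier := I\<rparr>, l \<circ> i, r \<circ> j')"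
    unfolding cc1 cc2 comp_unf P_def l_def r_def I_def Let_def by simp
  have D: "vecspace D" unfolding D_def using dsum_vs N M by blast
  have Ds: "vadd D (a,b) (c,d) = (vadd N a c, vadd M b d)" "vzero D = (vzero N, vzero M)"
    "vscale D k (a,b) = (vscale N k a, vscale M k b)" for a b c d k unfolding D_def by (simp_all add: dsum_simps)
  have S: "subspace_of D K" unfolding D_def K_def using po_sub[OF Y N M j i'] .
  have Pq: "P = quot D K" unfolding P_def pushout_sp_def D_def K_def ..
  have P: "vecspace P" unfolding Pq using q_vs[OF D S] .
  have ldef: "l n = vcoset D K (n, vzero M)" for n unfolding l_def po_inl_def D_def K_def ..
  have rdef: "r m = vcoset D K (vzero N, m)" for m unfolding r_def po_inr_def D_def K_def ..
  note zN = vz[OF N] and zM = vz[OF M]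
  note ci = lin_closed[OF i] and cj' = lin_closed[OF j']
  have cD: "(a,b) \<in> vcarrier D" if "a \<in> vcarrier N" "b \<in> vcarrier M" for a b
    using that by (simp add: D_def dsum_simps)
  have lr: "vadd P (l n) (r m) = vcoset D K (n, m)" if nm: "n \<in> vcarrier N" "m \<in> vcarrier M" for n m
  proof -
    have "vadd P (l n) (r m) = vcoset D K (vadd D (n, vzero M) (vzero N, m))"
      unfolding Pq ldef rdef using q_add[OF D S cD[OF nm(1) zM] cD[OF zN nm(2)]] .
    thus ?thesis using nm vrz[OF N] vlz[OF M] by (simp add: Ds)
  qed
  have Ieq: "I = {vcoset D K (i x, j' z) | x z. x \<in> vcarrier X \<and> z \<in> vcarrier Z}"
  proof -
    have lr2: "\<And>x z. x \<in> vcarrier X \<Longrightarrow> z \<in> vcarrier Z \<Longrightarrow> vadd P (l (i x)) (r (j' z)) = vcoset D K (i x, j' z)"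
      using lr ci cj' by blast
    show ?thesis unfolding I_def
    proof (rule set_eqI, rule iffI)
      fix a assume "a \<in> {vadd P (l (i x)) (r (j' z)) |x z. x \<in> vcarrier X \<and> z \<in> vcarrier Z}"
      then obtain x z where "x \<in> vcarrier X" "z \<in> vcarrier Z" "a = vadd P (l (i x)) (r (j' z))" by blast
      thus "a \<in> {vcoset D K (i x, j' z) |x z. x \<in> vcarrier X \<and> z \<in> vcarrier Z}" using lr2 by blast
    next
      fix a assume "a \<in> {vcoset D K (i x, j' z) |x z. x \<in> vcarrier X \<and> z \<in> vcarrier Z}"
      then obtain x z where "x \<in> vcarrier X" "z \<in> vcarrier Z" "a = vcoset D K (i x, j' z)" by blast
      thus "a \<in> {vadd P (l (i x)) (r (j' z)) |x z. x \<in> vcarrier X \<and> z \<in> vcarrier Z}" using lr2 by blast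
    qed
  qed
  have SI: "subspace_of P I" unfolding subspace_of_def
  proof (intro conjI ballI allI)
    show "I \<subseteq> vcarrier P" unfolding Ieq Pq q_carrier[OF D S] using ci cj' cD by blast
    have "vzero P = vcoset D K (i (vzero X), j' (vzero Z))"
      unfolding Pq q_zero[OF D S] using lin_z[OF X N i] lin_z[OF Z M j'] by (simp add: Ds)
    thus "vzero P \<in> I" unfolding Ieq using vz[OF X] vz[OF Z] by blast
  next
    fix a b assume "a \<in> I" "b \<in> I"
    then obtain x1 z1 x2 z2 where xz: "x1 \<in> vcarrier X" "z1 \<in> vcarrier Z" "a = vcoset D K (i x1, j' z1)"
      "x2 \<in> vcarrier X" "z2 \<in> vcarrier Z" "b = vcoset D K (i x2, j' z2)" unfolding Ieq by blast
    have "vadd P a b = vcoset D K (i (vadd X x1 x2), j' (vadd Z z1 z2))"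
      unfolding Pq using xz q_add[OF D S] cD ci cj' lin_add[OF i] lin_add[OF j'] by (simp add: Ds)
    thus "vadd P a b \<in> I" unfolding Ieq using xz vaddc[OF X] vaddc[OF Z] by blast
  next
    fix c a assume "a \<in> I"
    then obtain x1 z1 where xz: "x1 \<in> vcarrier X" "z1 \<in> vcarrier Z" "a = vcoset D K (i x1, j' z1)"
      unfolding Ieq by blast
    have "vscale P c a = vcoset D K (i (vscale X c x1), j' (vscale Z c z1))"
      unfolding Pq using xz q_sc[OF D S] cD ci cj' lin_sc[OF i] lin_sc[OF j'] by (simp add: Ds)
    thus "vscale P c a \<in> I" unfolding Ieq using xz vscc[OF X] vscc[OF Z] by blast
  qed
  have P': "vecspace (P\<lparr>vcarrier := I\<rparr>)" using sub_vs[OF P SI] .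
  have L1: "linmap X (P\<lparr>vcarrier := I\<rparr>) (l \<circ> i)" unfolding linmap_def
  proof (simp only: upd, intro conjI ballI allI)
    fix x assume x: "x \<in> vcarrier X"
    have "(l \<circ> i) x = vcoset D K (i x, j' (vzero Z))" using ldef lin_z[OF Z M j'] by simp
    thus "(l \<circ> i) x \<in> I" unfolding Ieq using x vz[OF Z] by blast
  next
    fix x y assume "x \<in> vcarrier X" "y \<in> vcarrier X"
    thus "(l \<circ> i) (vadd X x y) = vadd P ((l \<circ> i) x) ((l \<circ> i) y)"
      unfolding Pq using ldef q_add[OF D S] cD ci zM lin_add[OF i] vlz[OF M] by (simp add: Ds)
  next
    fix c x assume "x \<in> vcarrier X"
    thus "(l \<circ> i) (vscale X c x) = vscale P c ((l \<circ> i) x)"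
      unfolding Pq using ldef q_sc[OF D S] cD ci zM lin_sc[OF i] vscz[OF M] by (simp add: Ds)
  qed
  have L2: "linmap Z (P\<lparr>vcarrier := I\<rparr>) (r \<circ> j')" unfolding linmap_def
  proof (simp only: upd, intro conjI ballI allI)
    fix x assume x: "x \<in> vcarrier Z"
    have "(r \<circ> j') x = vcoset D K (i (vzero X), j' x)" using rdef lin_z[OF X N i] by simp
    thus "(r \<circ> j') x \<in> I" unfolding Ieq using x vz[OF X] by blast
  next
    fix x y assume "x \<in> vcarrier Z" "y \<in> vcarrier Z"
    thus "(r \<circ> j') (vadd Z x y) = vadd P ((r \<circ> j') x) ((r \<circ> j') y)"
      unfolding Pq using rdef q_add[OF D S] cD cj' zN lin_add[OF j'] vlz[OF N] by (simp add: Ds)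
  next
    fix c x assume "x \<in> vcarrier Z"
    thus "(r \<circ> j') (vscale Z c x) = vscale P c ((r \<circ> j') x)"
      unfolding Pq using rdef q_sc[OF D S] cD cj' zN lin_sc[OF j'] vscz[OF N] by (simp add: Ds)
  qed
  have epi: "epi_corel X Z (P\<lparr>vcarrier := I\<rparr>, l \<circ> i, r \<circ> j')" unfolding epi_corel_unf
  proof (intro conjI P' L1 L2 ballI)
    fix a assume "a \<in> vcarrier (P\<lparr>vcarrier := I\<rparr>)"
    then obtain x z where "x \<in> vcarrier X" "z \<in> vcarrier Z" "a = vadd P (l (i x)) (r (j' z))"
      unfolding I_def by auto
    thus "\<exists>u\<in>vcarrier X. \<exists>v\<in>vcarrier Z. a = vadd (P\<lparr>vcarrier := I\<rparr>) ((l \<circ> i) u) ((r \<circ> j') v)" by auto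
  qed
  have key: "l (i x) = r (j' z) \<longleftrightarrow> (\<exists>y\<in>vcarrier Y. i x = j y \<and> i' y = j' z)"
    if xz: "x \<in> vcarrier X" "z \<in> vcarrier Z" for x z
  proof -
    have "l (i x) = r (j' z) \<longleftrightarrow> vadd D (i x, vzero M) (vscale D (-1) (vzero N, j' z)) \<in> K"
      unfolding ldef rdef by (rule q_eq[OF D S cD cD]) (use xz ci cj' zN zM in auto)
    also have "vadd D (i x, vzero M) (vscale D (-1) (vzero N, j' z)) = (i x, vscale M (-1) (j' z))"
      using xz ci cj' vscz[OF N] vrz[OF N] vlz[OF M] vscc[OF M] by (simp add: Ds)
    also have "\<dots> \<in> K \<longleftrightarrow> (\<exists>y\<in>vcarrier Y. i x = j y \<and> vscale M (-1) (j' z) = vscale M (-1) (i' y))"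
      unfolding K_def po_ker_def by auto
    also have "\<dots> \<longleftrightarrow> (\<exists>y\<in>vcarrier Y. i x = j y \<and> i' y = j' z)"
    proof (rule bex_cong[OF refl])
      fix y assume y: "y \<in> vcarrier Y"
      have "vscale M (-1) (j' z) = vscale M (-1) (i' y) \<longleftrightarrow> j' z = i' y"
        using vnegneg[OF M] cj'[OF xz(2)] lin_closed[OF i' y] by metis
      thus "(i x = j y \<and> vscale M (-1) (j' z) = vscale M (-1) (i' y)) \<longleftrightarrow> (i x = j y \<and> i' y = j' z)" by auto
    qed
    finally show ?thesis .
  qed
  have sets: "{(u,v). u \<in> vcarrier X \<and> v \<in> vcarrier Z \<and> (l \<circ> i) u = (r \<circ> j') v} =
     {(u,v). u \<in> vcarrier X \<and> v \<in> vcarrier Y \<and> i u = j v} O {(u,v). u \<in> vcarrier Y \<and> v \<in> vcarrier Z \<and> i' u = j' v}"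
  proof (intro set_eqI iffI)
    fix p assume "p \<in> {(u,v). u \<in> vcarrier X \<and> v \<in> vcarrier Z \<and> (l \<circ> i) u = (r \<circ> j') v}"
    then obtain x z where xz: "p = (x,z)" "x \<in> vcarrier X" "z \<in> vcarrier Z" "l (i x) = r (j' z)" by auto
    have "\<exists>y\<in>vcarrier Y. i x = j y \<and> i' y = j' z" using key[OF xz(2,3), THEN iffD1, OF xz(4)] .
    then obtain y where yy: "y \<in> vcarrier Y" "i x = j y" "i' y = j' z" by blast
    show "p \<in> {(u,v). u \<in> vcarrier X \<and> v \<in> vcarrier Y \<and> i u = j v} O {(u,v). u \<in> vcarrier Y \<and> v \<in> vcarrier Z \<and> i' u = j' v}"
      unfolding xz(1) by (rule relcompI[of x y _ z]) (use xz(2,3) yy in simp_all)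
  next
    fix p assume "p \<in> {(u,v). u \<in> vcarrier X \<and> v \<in> vcarrier Y \<and> i u = j v} O {(u,v). u \<in> vcarrier Y \<and> v \<in> vcarrier Z \<and> i' u = j' v}"
    then obtain x y z where xyz: "p = (x,z)" "x \<in> vcarrier X" "z \<in> vcarrier Z" "y \<in> vcarrier Y" "i x = j y" "i' y = j' z" by blast
    have "\<exists>y\<in>vcarrier Y. i x = j y \<and> i' y = j' z" using xyz by blast
    hence "l (i x) = r (j' z)" using key[OF xyz(2,3), THEN iffD2] by blast
    thus "p \<in> {(u,v). u \<in> vcarrier X \<and> v \<in> vcarrier Z \<and> (l \<circ> i) u = (r \<circ> j') v}"
      unfolding xyz(1) using xyz(2,3) by simp
  qed
  have "corel_rel X Z (P\<lparr>vcarrier := I\<rparr>, l \<circ> i, r \<circ> j') = corel_rel X Y c1 O corel_rel Y Z c2"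
    unfolding corel_rel_eq[OF P' L1 L2] cc1 cc2 corel_rel_eq[OF N i j] corel_rel_eq[OF M i' j'] by (rule sets)
  thus ?thesis using epi unfolding cdef by (intro conjI)
qed


theorem mainTheorem14:
  shows
  \<comment> \<open>(1) costability: the pushout of an injective linear map along any linear map is injective\<close>
  "(\<forall>(Y :: ('k::field, 'y) vs) (N :: ('k, 'n) vs) (M :: ('k, 'm) vs) f g.
       vecspace Y \<and> vecspace N \<and> vecspace M \<and> linmap Y N f \<and> linmap Y M g \<and>
       inj_on f (vcarrier Y)
       \<longrightarrow> inj_on (po_inr Y N M f g) (vcarrier M))
   \<and>
  \<comment> \<open>(2a) the assignment lands in LinRel\<close>
   (\<forall>(U :: ('k, 'u) vs) (V :: ('k, 'v) vs) (c :: ('k, 'u, 'v, 'a) cospan).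
       vecspace U \<and> vecspace V \<and> epi_corel U V c \<longrightarrow> linrel U V (corel_rel U V c))
   \<and>
  \<comment> \<open>(2b) well-defined on isomorphism classes and faithful\<close>
   (\<forall>(U :: ('k, 'u) vs) (V :: ('k, 'v) vs) (c :: ('k, 'u, 'v, 'a) cospan) (d :: ('k, 'u, 'v, 'b) cospan).
       vecspace U \<and> vecspace V \<and> epi_corel U V c \<and> epi_corel U V d
       \<longrightarrow> (corel_rel U V c = corel_rel U V d \<longleftrightarrow> cospan_iso U V c d))
   \<and>
  \<comment> \<open>(2c) full\<close>
   (\<forall>(U :: ('k, 'u) vs) (V :: ('k, 'v) vs) L.
       vecspace U \<and> vecspace V \<and> linrel U V L
       \<longrightarrow> (\<exists>c :: ('k, 'u, 'v, ('u \<times> 'v) set) cospan. epi_corel U V c \<and> corel_rel U V c = L))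
   \<and>
  \<comment> \<open>(2d) preserves identities\<close>
   (\<forall>X :: ('k, 'x) vs. vecspace X
       \<longrightarrow> epi_corel X X (corel_id X) \<and> corel_rel X X (corel_id X) = Id_on (vcarrier X))
   \<and>
  \<comment> \<open>(2e) preserves composition\<close>
   (\<forall>(X :: ('k, 'x) vs) (Y :: ('k, 'y) vs) (Z :: ('k, 'z) vs)
       (c1 :: ('k, 'x, 'y, 'a) cospan) (c2 :: ('k, 'y, 'z, 'b) cospan).
       vecspace X \<and> vecspace Y \<and> vecspace Z \<and> epi_corel X Y c1 \<and> epi_corel Y Z c2
       \<longrightarrow> epi_corel X Z (corel_comp X Y Z c1 c2) \<and>
           corel_rel X Z (corel_comp X Y Z c1 c2) = corel_rel X Y c1 O corel_rel Y Z c2)"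
  apply (intro conjI allI impI)
  subgoal by (elim conjE) (rule part1; assumption)
  subgoal by (elim conjE) (rule part2a; assumption)
  subgoal by (elim conjE) (rule part2b; assumption)
  subgoal by (elim conjE) (rule part2c; assumption)
  subgoal using part2d by blast
  subgoal using part2d by blast
  subgoal using part2e by blast
  subgoal using part2e by blast
  done

end
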